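(* Let $p,q$ be primes and let $G$ be a non-abelian group of order $pq$. Then $G$ is a metacyclic group with trivial centre, and its right and left commutation semigroups $\mathrm{P}(G)$ and $\Lambda(G)$ are complete (with respect to a presentation of $G$ as $G(m,n,k)$).
   Context: For positive integers $m,n,k$ with $(m,k-1)=1$ and $n=\mathrm{ind}_m(k)$ (the least $d\ge1$ with $k^d\equiv1\pmod m$), $G(m,n,k)=\langle a,b;\ a^m=1,\ b^n=1,\ b^{-1}ab=a^k\rangle$; elements are written uniquely as $a^ib^j$, $i\in\mathbb{Z}_m$, $j\in\mathbb{Z}_n$, and $k_t=k^t-1\pmod m$. Commutators are $[x,y]=x^{-1}y^{-1}xy$; $(x)\rho(g)=[x,g]$, $(x)\lambda(g)=[g,x]$; maps are written on the right and composed left to right; $\mathrm{P}(G)$, $\Lambda(G)$ are the semigroups generated by all $\rho(g)$, resp. all $\lambda(g)$. With $R=\{k_j:j\in\mathbb{Z}_n\}$, $L=\{-k_j:j\in\mathbb{Z}_n\}$ one has $\mathrm{P}(G)=\Sigma_G(R)$, $\Lambda(G)=\Sigma_G(L)$, and completeness of $\mathrm{P}(G)$, $\Lambda(G)$ means completeness of $\Sigma_G(R)$, $\Sigma_G(L)$. Here: $(a^ib^j)\mu(x,y)=a^{xik^j-yk_j}$, $C(x,y)=\{\mu(x,yz):z\in\mathbb{Z}_m\}$; $S^*$ is the multiplicative subsemigroup of $\mathbb{Z}_m$ generated by $S$; $\Sigma_G(S)$ is the semigroup generated by $\{\mu(s,z):s\in S,z\in\mathbb{Z}_m\}$; for $x\in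 S^*$, $Y(x)=\{s^*z: s^*\in S^*, z\in\mathbb{Z}_m, \exists s\in S,\ x\equiv ss^*\}$; the $x$-family $\{C(x,y):y\in Y(x)\}$ is complete if it contains $C(x,1)$; $\Sigma_G(S)$ is complete if all $x$-families ($x\in S^*$) are complete. *)

theory Defs
  imports "HOL-Algebra.Algebra" "HOL-Number_Theory.Number_Theory"
begin

definition centre :: "('a, 'b) monoid_scheme \<Rightarrow> 'a set" where
  "centre G = {z \<in> carrier G. \<forall>g \<in> carrier G. z \<otimes>\<^bsub>G\<^esub> g = g \<otimes>\<^bsub>G\<^esub> z}"

definition metacyclic :: "('a, 'b) monoid_scheme \<Rightarrow> bool" where
  "metacyclic G \<longleftrightarrow> (\<exists>N. N \<lhd> G \<and> cyclic_group (G\<lparr>carrier := N\<rparr>) \<and> cyclic_group (G Mod N))"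

text \<open>The element a^i b^j (i in Z_m, j in Z_n) is represented by the pair (i,j) with
  0 <= i < m, 0 <= j < n.  From b^{-1} a b = a^k we get b^j a^s = a^{s k^{n-j}} b^j
  (as k^n = 1 mod m), hence the multiplication below.\<close>
definition Gmnk :: "nat \<Rightarrow> nat \<Rightarrow> nat \<Rightarrow> (int \<times> int) monoid" where
  "Gmnk m n k = \<lparr> carrier = {0..<int m} \<times> {0..<int n},
     monoid.mult = (\<lambda>(i, j) (s, t). ((i + s * int k ^ nat (int n - j)) mod int m, (j + t) mod int n)),
     monoid.one = (0, 0) \<rparr>"

definition Gmnk_params :: "nat \<Rightarrow> nat \<Rightarrow> nat \<Rightarrow> bool" where
  "Gmnk_params m n k \<longleftrightarrow> 0 < m \<and> 0 < n \<and> 0 < k \<and> coprime m (k - 1) \<and> n = ord m k"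

definition kk :: "nat \<Rightarrow> nat \<Rightarrow> int \<Rightarrow> int" where
  "kk m k t = (int k ^ nat t - 1) mod int m"

definition mu :: "nat \<Rightarrow> nat \<Rightarrow> nat \<Rightarrow> int \<Rightarrow> int \<Rightarrow> (int \<times> int \<Rightarrow> int \<times> int)" where
  "mu m n k x y = (\<lambda>(i, j) \<in> carrier (Gmnk m n k).
      ((x * i * int k ^ nat j - y * kk m k j) mod int m, 0))"

definition Cfam :: "nat \<Rightarrow> nat \<Rightarrow> nat \<Rightarrow> int \<Rightarrow> int \<Rightarrow> (int \<times> int \<Rightarrow> int \<times> int) set" where
  "Cfam m n k x y = {mu m n k x ((y * z) mod int m) | z. z \<in> {0..<int m}}"

definition starS :: "nat \<Rightarrow> int set \<Rightarrow> int set" where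
  "starS m S = {prod_list xs mod int m | xs. xs \<noteq> [] \<and> set xs \<subseteq> S}"

definition Yset :: "nat \<Rightarrow> int set \<Rightarrow> int \<Rightarrow> int set" where
  "Yset m S x = {(s' * z) mod int m | s' z. s' \<in> starS m S \<and> z \<in> {0..<int m} \<and>
                   (\<exists>s \<in> S. [x = s * s'] (mod int m))}"

definition Sigma_complete :: "nat \<Rightarrow> nat \<Rightarrow> nat \<Rightarrow> int set \<Rightarrow> bool" where
  "Sigma_complete m n k S \<longleftrightarrow>
     (\<forall>x \<in> starS m S. \<exists>y \<in> Yset m S x. Cfam m n k x y = Cfam m n k x 1)"

definition Rset :: "nat \<Rightarrow> nat \<Rightarrow> nat \<Rightarrow> int set" where
  "Rset m n k = {kk m k j | j. j \<in> {0..<int n}}"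

definition Lset :: "nat \<Rightarrow> nat \<Rightarrow> nat \<Rightarrow> int set" where
  "Lset m n k = {(- kk m k j) mod int m | j. j \<in> {0..<int n}}"

end

theory Submission
  imports Defs
begin

lemma dvd_p2:
  assumes p: "Factorial_Ring.prime (p::nat)" and d: "d dvd p * p"
  shows "d = 1 \<or> d = p \<or> d = p * p"
proof -
  have "d dvd p ^ 2" using d by (simp add: power2_eq_square)
  then obtain i where "i \<le> 2" "d = p ^ i" using divides_primepow_nat[OF p] by blast
  then have "i = 0 \<or> i = 1 \<or> i = 2" by auto
  then show ?thesis using \<open>d = p ^ i\<close> by (auto simp: power2_eq_square)
qed

lemma fermat_int:
  assumes p: "Factorial_Ring.prime (p::nat)" and c: "\<not> int p dvd c"
  shows "[c ^ (p - 1) = 1] (mod int p)"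
proof -
  have pp: "0 < int p" using p prime_gt_0_nat by simp
  define c' where "c' = nat (c mod int p)"
  have ic: "int c' = c mod int p" unfolding c'_def using pp by simp
  have "\<not> p dvd c'"
  proof
    assume "p dvd c'"
    then have "int p dvd int c'" by simp
    then have "int p dvd c mod int p" using ic by simp
    then show False using c dvd_mod_iff[of "int p" "int p" c] by simp
  qed
  then have "[c' ^ (p - 1) = 1] (mod p)" by (rule fermat_theorem[OF p])
  then have "[int c' ^ (p - 1) = int 1] (mod int p)" using cong_int_iff[of "c' ^ (p - 1)" 1 p] by simp
  moreover have "[c = int c'] (mod int p)" using ic by (simp add: cong_def)
  then have "[c ^ (p - 1) = int c' ^ (p - 1)] (mod int p)" by (rule cong_pow)
  ultimately show ?thesis using cong_trans by fastforce
qed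

lemma Cfam_mem: "z \<in> {0..<int m} \<Longrightarrow> mu m n k x ((y * z) mod int m) \<in> Cfam m n k x y"
  unfolding Cfam_def by blast

lemma Cfam_unit:
  assumes p: "Factorial_Ring.prime (p::nat)" and y: "\<not> int p dvd y"
  shows "Cfam p n k x y = Cfam p n k x 1"
proof -
  have pi: "Factorial_Ring.prime (int p)" using p by (simp add: prime_nat_int_transfer)
  have "coprime y (int p)" using prime_imp_coprime[OF pi y] by (simp add: coprime_commute)
  then obtain u where u: "[y * u = 1] (mod int p)" using cong_solve_coprime_int by blast
  have pp: "0 < int p" using p prime_gt_0_nat by simp
  show ?thesis
  proof
    show "Cfam p n k x y \<subseteq> Cfam p n k x 1"
    proof
      fix f assume "f \<in> Cfam p n k x y"
      then obtain z where f: "f = mu p n k x ((y * z) mod int p)" "z \<in> {0..<int p}" unfolding Cfam_def by blast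
      have "(y * z) mod int p \<in> {0..<int p}" using pp by simp
      moreover have "(1 * ((y * z) mod int p)) mod int p = (y * z) mod int p" by simp
      ultimately show "f \<in> Cfam p n k x 1" using f Cfam_mem[of "(y * z) mod int p" p n k x 1] by simp
    qed
    show "Cfam p n k x 1 \<subseteq> Cfam p n k x y"
    proof
      fix f assume "f \<in> Cfam p n k x 1"
      then obtain z where f: "f = mu p n k x ((1 * z) mod int p)" "z \<in> {0..<int p}" unfolding Cfam_def by blast
      define z' where "z' = (u * z) mod int p"
      have z': "z' \<in> {0..<int p}" unfolding z'_def using pp by simp
      have "[y * z' = y * (u * z)] (mod int p)" unfolding z'_def by (simp add: cong_def mod_mult_right_eq)
      also have "[y * (u * z) = 1 * z] (mod int p)" unfolding mult.assoc[symmetric] by (intro cong_mult u cong_refl)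
      finally have "(y * z') mod int p = (1 * z) mod int p" by (simp add: cong_def)
      then have "f = mu p n k x ((y * z') mod int p)" using f by simp
      then show "f \<in> Cfam p n k x y" using Cfam_mem[OF z', of n k x y] by simp
    qed
  qed
qed

lemma Sigma_complete_prime:
  assumes p: "Factorial_Ring.prime (p::nat)" and S0: "0 \<in> S" and Sb: "b \<in> S" and nb: "\<not> int p dvd b"
  shows "Sigma_complete p n k S"
  unfolding Sigma_complete_def
proof
  fix x assume "x \<in> starS p S"
  then obtain xs where xs: "x = prod_list xs mod int p" "xs \<noteq> []" "set xs \<subseteq> S" by (auto simp: starS_def)
  have pp: "0 < int p" using p prime_gt_0_nat by simp
  have p2: "2 \<le> p" using p prime_ge_2_nat by simp
  have key: "\<exists>s' s. s' \<in> starS p S \<and> s \<in> S \<and> [x = s * s'] (mod int p) \<and> \<not> int p dvd s'"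
  proof (cases "int p dvd x")
    case True
    have "b mod int p \<in> starS p S" unfolding starS_def using Sb by (auto intro!: exI[of _ "[b]"])
    moreover have "[x = 0 * (b mod int p)] (mod int p)" using True by (simp add: cong_def)
    moreover have "\<not> int p dvd b mod int p" using nb dvd_mod_iff[of "int p" "int p" b] by simp
    ultimately show ?thesis using S0 by blast
  next
    case False
    obtain c cs where ccs: "xs = c # cs" using xs(2) by (cases xs) auto
    have cS: "c \<in> S" and csS: "set cs \<subseteq> S" using xs(3) ccs by auto
    have nc: "\<not> int p dvd c"
    proof
      assume "int p dvd c"
      then have "int p dvd prod_list xs" using ccs by simp
      then have "int p dvd x" using xs(1) dvd_mod_iff[of "int p" "int p" "prod_list xs"] by simp
      then show False using False by simp
    qed
    define s' where "s' = prod_list (cs @ replicate (p - 1) c) mod int p"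
    have s'S: "s' \<in> starS p S" unfolding starS_def s'_def using cS csS p2
      by (auto intro!: exI[of _ "cs @ replicate (p - 1) c"])
    have "[c * s' = c * prod_list (cs @ replicate (p - 1) c)] (mod int p)"
      unfolding s'_def by (simp add: cong_def mod_mult_right_eq)
    also have "c * prod_list (cs @ replicate (p - 1) c) = prod_list xs * c ^ (p - 1)"
      using ccs by (simp add: prod_list_replicate)
    also have "[prod_list xs * c ^ (p - 1) = prod_list xs * 1] (mod int p)"
      by (intro cong_mult cong_refl fermat_int[OF p nc])
    also have "[prod_list xs * 1 = x] (mod int p)" using xs(1) by (simp add: cong_def)
    finally have e: "[c * s' = x] (mod int p)" .
    have "\<not> int p dvd s'"
    proof
      assume "int p dvd s'"
      then have "int p dvd c * s'" by simp
      then have "int p dvd x" using cong_dvd_iff[OF e] by simp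
      then show False using False by simp
    qed
    then show ?thesis using s'S cS e cong_sym by blast
  qed
  then obtain s' s where s: "s' \<in> starS p S" "s \<in> S" "[x = s * s'] (mod int p)" "\<not> int p dvd s'" by blast
  define y where "y = (s' * 1) mod int p"
  have one: "(1::int) \<in> {0..<int p}" using p2 by simp
  have "y \<in> Yset p S x" unfolding Yset_def y_def mem_Collect_eq
    apply (rule exI[of _ s'])
    apply (rule exI[of _ 1])
    using s(1,2,3) one by blast
  moreover have "\<not> int p dvd y" unfolding y_def using s(4) dvd_mod_iff[of "int p" "int p" s'] by simp
  then have "Cfam p n k x y = Cfam p n k x 1" by (rule Cfam_unit[OF p])
  ultimately show "\<exists>y\<in>Yset p S x. Cfam p n k x y = Cfam p n k x 1" by blast
qed


context group begin

lemma card_subgroup_dvd: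
  assumes "subgroup H G" "subgroup K G" "K \<subseteq> H"
  shows "card K dvd card H"
proof -
  have gH: "group (G\<lparr>carrier := H\<rparr>)" using assms(1) by (rule subgroup_imp_group)
  have "subgroup K (G\<lparr>carrier := H\<rparr>)" using subgroup_incl assms by blast
  then have "card (rcosets\<^bsub>G\<lparr>carrier := H\<rparr>\<^esub> K) * card K = order (G\<lparr>carrier := H\<rparr>)"
    using group.lagrange[OF gH] by blast
  then have "card (rcosets\<^bsub>G\<lparr>carrier := H\<rparr>\<^esub> K) * card K = card H" by (simp add: order_def)
  moreover have "card K dvd card (rcosets\<^bsub>G\<lparr>carrier := H\<rparr>\<^esub> K) * card K" by simp
  ultimately show ?thesis by simp
qed

lemma ord_card_gen: "x \<in> carrier G \<Longrightarrow> card (generate G {x}) = ord x"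
  using generate_pow_card by simp

lemma gen_sub: "x \<in> carrier G \<Longrightarrow> generate G {x} \<subseteq> carrier G"
  using generate_incl by blast

lemma gen_mem_sub:
  assumes "a \<in> carrier G" "y \<in> generate G {a}"
  shows "generate G {y} \<subseteq> generate G {a}"
  using assms generate_subgroup_incl[OF _ generate_is_subgroup[of "{a}"]] by blast

lemma gen_mem_ord_dvd:
  assumes "a \<in> carrier G" "y \<in> generate G {a}"
  shows "ord y dvd ord a"
proof -
  have y: "y \<in> carrier G" using assms gen_sub by blast
  have "card (generate G {y}) dvd card (generate G {a})"
    by (rule card_subgroup_dvd) (use assms y gen_mem_sub generate_is_subgroup in auto)
  then show ?thesis using assms y ord_card_gen by simp
qed

lemma prime_gen_eq:
  assumes "finite (carrier G)" "a \<in> carrier G" "Factorial_Ring.prime (ord a)" "y \<in> generate G {a}" "y \<noteq> \<one>"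
  shows "generate G {y} = generate G {a}"
proof -
  have y: "y \<in> carrier G" using assms gen_sub by blast
  have "ord y dvd ord a" using gen_mem_ord_dvd assms by blast
  moreover have "ord y \<noteq> 1" using ord_eq_1 y assms by blast
  ultimately have "ord y = ord a" using assms(3) unfolding prime_nat_iff by blast
  then have "card (generate G {y}) = card (generate G {a})" using y assms ord_card_gen by simp
  moreover have "finite (generate G {a})" using assms gen_sub finite_subset by blast
  ultimately show ?thesis using gen_mem_sub[OF assms(2,4)] card_subset_eq by blast
qed

lemma pow_mod_ord:
  assumes x: "x \<in> carrier G"
  shows "x [^] (n::nat) = x [^] (n mod ord x)"
proof -
  have "x [^] n = x [^] (ord x * (n div ord x) + n mod ord x)" by simp
  also have "\<dots> = (x [^] ord x) [^] (n div ord x) \<otimes> x [^] (n mod ord x)"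
    by (simp only: nat_pow_pow[OF x] nat_pow_mult[OF x])
  also have "\<dots> = x [^] (n mod ord x)" using x by simp
  finally show ?thesis .
qed

lemma pow_eq_cong:
  assumes x: "x \<in> carrier G"
  shows "(x [^] (m::nat) = x [^] (n::nat)) \<longleftrightarrow> [m = n] (mod ord x)"
proof -
  have "x [^] m = x [^] n \<longleftrightarrow> x [^] int m = x [^] int n" by (simp add: int_pow_int)
  also have "\<dots> \<longleftrightarrow> int (ord x) dvd (int n - int m)" by (rule int_pow_eq[OF x])
  also have "\<dots> \<longleftrightarrow> [int m = int n] (mod int (ord x))"
    by (simp add: cong_iff_dvd_diff dvd_diff_commute)
  also have "\<dots> \<longleftrightarrow> [m = n] (mod ord x)" by (rule cong_int_iff)
  finally show ?thesis .
qed

lemma elem_prime_ord: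
  assumes fin: "finite (carrier G)" and r: "Factorial_Ring.prime r" and dv: "r dvd order G"
  shows "\<exists>x \<in> carrier G. ord x = r"
proof -
  obtain m where om: "order G = r ^ 1 * m" using dv by auto
  obtain H where H: "subgroup H G" "card H = r" using sylow_thm[OF r is_group om fin] by auto
  have "card H \<ge> 2" using H r prime_ge_2_nat by simp
  have "\<not> H \<subseteq> {\<one>}"
  proof
    assume "H \<subseteq> {\<one>}"
    then have "card H \<le> card {\<one>}" by (rule card_mono[rotated]) simp
    then show False using \<open>card H \<ge> 2\<close> by simp
  qed
  then obtain x where x: "x \<in> H" "x \<noteq> \<one>" by blast
  have xc: "x \<in> carrier G" by (rule subgroup.mem_carrier[OF H(1) x(1)])
  have "{x} \<subseteq> H" using x by simp
  then have "generate G {x} \<subseteq> H" using H(1) by (rule generate_subgroup_incl)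
  then have "card (generate G {x}) dvd card H"
    using card_subgroup_dvd[OF H(1) generate_is_subgroup] xc by simp
  then have "ord x dvd r" using H(2) ord_card_gen[OF xc] by simp
  moreover have "ord x \<noteq> 1" using ord_eq_1[OF xc] x(2) by simp
  ultimately have "ord x = r" using r unfolding prime_nat_iff by blast
  then show ?thesis using xc by blast
qed

lemma centralizer_subgroup:
  assumes x: "x \<in> carrier G" shows "subgroup {g \<in> carrier G. g \<otimes> x = x \<otimes> g} G"
proof (rule subgroupI)
  show "{g \<in> carrier G. g \<otimes> x = x \<otimes> g} \<noteq> {}" using x by auto
  show "inv a \<in> {g \<in> carrier G. g \<otimes> x = x \<otimes> g}" if "a \<in> {g \<in> carrier G. g \<otimes> x = x \<otimes> g}" for a
  proof -
    have a: "a \<in> carrier G" "a \<otimes> x = x \<otimes> a" using that by auto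
    have "inv a \<otimes> x = inv a \<otimes> (x \<otimes> a) \<otimes> inv a" using a x by (simp add: m_assoc)
    also have "\<dots> = inv a \<otimes> (a \<otimes> x) \<otimes> inv a" using a by simp
    also have "\<dots> = (inv a \<otimes> a) \<otimes> x \<otimes> inv a" using a x by (simp only: m_assoc inv_closed m_closed)
    also have "\<dots> = x \<otimes> inv a" using a x by simp
    finally show ?thesis using a by simp
  qed
  show "a \<otimes> b \<in> {g \<in> carrier G. g \<otimes> x = x \<otimes> g}"
    if "a \<in> {g \<in> carrier G. g \<otimes> x = x \<otimes> g}" "b \<in> {g \<in> carrier G. g \<otimes> x = x \<otimes> g}" for a b
  proof -
    have a: "a \<in> carrier G" "a \<otimes> x = x \<otimes> a" and b: "b \<in> carrier G" "b \<otimes> x = x \<otimes> b" using that by auto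
    have "a \<otimes> b \<otimes> x = a \<otimes> (x \<otimes> b)" using a b x by (simp add: m_assoc)
    also have "\<dots> = x \<otimes> (a \<otimes> b)" using a b x by (simp add: m_assoc[symmetric])
    finally show ?thesis using a b by simp
  qed
qed auto

lemma centre_subgroup: "subgroup (centre G) G"
proof (rule subgroupI)
  show "centre G \<subseteq> carrier G" unfolding centre_def by auto
  show "centre G \<noteq> {}" unfolding centre_def by auto
  show "inv a \<in> centre G" if "a \<in> centre G" for a
  proof -
    have a: "a \<in> carrier G" "\<And>g. g \<in> carrier G \<Longrightarrow> a \<otimes> g = g \<otimes> a" using that unfolding centre_def by auto
    have "inv a \<otimes> g = g \<otimes> inv a" if g: "g \<in> carrier G" for g
    proof -
      have ag: "a \<otimes> g = g \<otimes> a" using a g by blast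
      have "inv a \<otimes> g = inv a \<otimes> (g \<otimes> a) \<otimes> inv a" using a(1) g by (simp add: m_assoc)
      also have "\<dots> = inv a \<otimes> (a \<otimes> g) \<otimes> inv a" using ag by simp
      also have "\<dots> = (inv a \<otimes> a) \<otimes> g \<otimes> inv a" using a(1) g by (simp only: m_assoc inv_closed m_closed)
      also have "\<dots> = g \<otimes> inv a" using a(1) g by simp
      finally show ?thesis .
    qed
    then show ?thesis using a(1) unfolding centre_def by blast
  qed
  show "a \<otimes> b \<in> centre G" if "a \<in> centre G" "b \<in> centre G" for a b
  proof -
    have a: "a \<in> carrier G" "\<And>g. g \<in> carrier G \<Longrightarrow> a \<otimes> g = g \<otimes> a"
     and b: "b \<in> carrier G" "\<And>g. g \<in> carrier G \<Longrightarrow> b \<otimes> g = g \<otimes> b" using that unfolding centre_def by auto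
    have "a \<otimes> b \<otimes> g = g \<otimes> (a \<otimes> b)" if g: "g \<in> carrier G" for g
    proof -
      have bg: "b \<otimes> g = g \<otimes> b" using b g by blast
      have ag: "a \<otimes> g = g \<otimes> a" using a g by blast
      have "a \<otimes> b \<otimes> g = a \<otimes> (g \<otimes> b)" using a(1) b(1) g bg by (simp add: m_assoc)
      also have "\<dots> = g \<otimes> (a \<otimes> b)" using a(1) b(1) g ag by (simp add: m_assoc[symmetric])
      finally show ?thesis .
    qed
    then show ?thesis using a(1) b(1) unfolding centre_def by blast
  qed
qed

lemma centre_full_comm: "centre G = carrier G \<Longrightarrow> comm_group G"
  by (rule group_comm_groupI) (auto simp: centre_def)

lemma p_squared_centre:
  assumes fin: "finite (carrier G)" and p: "Factorial_Ring.prime p" and o: "order G = p * p"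
  shows "\<exists>z \<in> carrier G. z \<noteq> \<one> \<and> z \<in> centre G"
proof (rule ccontr)
  assume nz: "\<not> ?thesis"
  define \<phi> where "\<phi> = (\<lambda>g. (\<lambda>h \<in> carrier G. g \<otimes> h \<otimes> (inv g)))"
  interpret A: group_action G "carrier G" \<phi> unfolding \<phi>_def by (rule action_by_conjugation)
  have orb_def: "orbits G (carrier G) \<phi> = (\<lambda>x. orbit G \<phi> x) ` carrier G"
    unfolding orbits_def by auto
  have fo: "finite (orbits G (carrier G) \<phi>)" using fin orb_def by simp
  have one_orb: "orbit G \<phi> \<one> = {\<one>}"
    unfolding orbit_def \<phi>_def by (auto intro!: exI[of _ \<one>])
  have dvdp: "p dvd card (orbit G \<phi> x)" if x: "x \<in> carrier G" "x \<noteq> \<one>" for x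
  proof -
    obtain g where g: "g \<in> carrier G" "x \<otimes> g \<noteq> g \<otimes> x" using nz x unfolding centre_def by auto
    have "x \<in> orbit G \<phi> x" unfolding orbit_def \<phi>_def using x by (auto intro!: exI[of _ \<one>])
    moreover have "g \<otimes> x \<otimes> inv g \<in> orbit G \<phi> x" unfolding orbit_def \<phi>_def using x g by auto
    moreover have "g \<otimes> x \<otimes> inv g \<noteq> x"
    proof
      assume "g \<otimes> x \<otimes> inv g = x"
      then have "g \<otimes> x \<otimes> inv g \<otimes> g = x \<otimes> g" by simp
      then have "g \<otimes> x = x \<otimes> g" using g x by (simp add: m_assoc)
      then show False using g by simp
    qed
    moreover have "finite (orbit G \<phi> x)" unfolding orbit_def \<phi>_def using fin by simp
    ultimately have "card (orbit G \<phi> x) \<noteq> 1"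
    proof (intro notI)
      assume a1: "x \<in> orbit G \<phi> x" "g \<otimes> x \<otimes> inv g \<in> orbit G \<phi> x" "g \<otimes> x \<otimes> inv g \<noteq> x"
        "finite (orbit G \<phi> x)" "card (orbit G \<phi> x) = 1"
      then obtain u where "orbit G \<phi> x = {u}" using card_1_singletonE by blast
      then show False using a1 by auto
    qed
    moreover have "card (orbit G \<phi> x) dvd p * p"
      unfolding o[symmetric] A.orbit_stabilizer_theorem[OF x(1), symmetric] by simp
    then have "card (orbit G \<phi> x) = 1 \<or> card (orbit G \<phi> x) = p \<or> card (orbit G \<phi> x) = p * p"
      by (rule dvd_p2[OF p])
    ultimately show ?thesis by auto
  qed
  have "(\<Sum>orb\<in>orbits G (carrier G) \<phi>. \<Sum>x\<in>orb. (1::nat)) = (\<Sum>x\<in>carrier G. 1)"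
    by (rule A.disjoint_sum[OF fin])
  then have S: "(\<Sum>orb\<in>orbits G (carrier G) \<phi>. card orb) = p * p" using o by (simp add: order_def)
  have one_in: "{\<one>} \<in> orbits G (carrier G) \<phi>" using orb_def one_orb by force
  have "(\<Sum>orb\<in>orbits G (carrier G) \<phi>. card orb) = card {\<one>} + (\<Sum>orb\<in>orbits G (carrier G) \<phi> - {{\<one>}}. card orb)"
    using sum.remove[OF fo one_in, of card] by simp
  moreover have "p dvd (\<Sum>orb\<in>orbits G (carrier G) \<phi> - {{\<one>}}. card orb)"
  proof (rule dvd_sum)
    fix orb assume "orb \<in> orbits G (carrier G) \<phi> - {{\<one>}}"
    then obtain x where "x \<in> carrier G" "orb = orbit G \<phi> x" "orb \<noteq> {\<one>}" using orb_def by auto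
    then show "p dvd card orb" using dvdp one_orb by auto
  qed
  ultimately have eq: "p * p = (\<Sum>orb\<in>orbits G (carrier G) \<phi> - {{\<one>}}. card orb) + 1" using S by simp
  have "p dvd (\<Sum>orb\<in>orbits G (carrier G) \<phi> - {{\<one>}}. card orb) + 1" by (subst eq[symmetric]) simp
  then have "p dvd 1" using dvd_add_right_iff \<open>p dvd (\<Sum>orb\<in>orbits G (carrier G) \<phi> - {{\<one>}}. card orb)\<close> by blast
  then show False using p by simp
qed

lemma p_squared_comm:
  assumes fin: "finite (carrier G)" and p: "Factorial_Ring.prime p" and o: "order G = p * p"
  shows "comm_group G"
proof -
  obtain z where z: "z \<in> carrier G" "z \<noteq> \<one>" "z \<in> centre G" using p_squared_centre[OF assms] by blast
  have genZ: "generate G {z} \<subseteq> centre G"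
    using generate_subgroup_incl[OF _ centre_subgroup] z by blast
  have p2: "order G = p ^ 2" using o by (simp add: power2_eq_square)
  have "ord z dvd p * p" using ord_dvd_group_order[OF z(1)] o by simp
  moreover have "ord z \<noteq> 1" using ord_eq_1 z by blast
  ultimately have oz: "p \<le> ord z" using dvd_p2[OF p] prime_gt_0_nat[OF p] by fastforce
  have "centre G = carrier G"
  proof
    show "centre G \<subseteq> carrier G" unfolding centre_def by auto
    show "carrier G \<subseteq> centre G"
    proof
      fix x assume x: "x \<in> carrier G"
      show "x \<in> centre G"
      proof (cases "x \<in> generate G {z}")
        case True then show ?thesis using genZ by blast
      next
        case False
        define C where "C = {g \<in> carrier G. g \<otimes> x = x \<otimes> g}"
        have sC: "subgroup C G" unfolding C_def by (rule centralizer_subgroup[OF x])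
        have "generate G {z} \<subseteq> C" unfolding C_def using genZ x by (auto simp: centre_def generate_incl)
        moreover have "x \<in> C" unfolding C_def using x by simp
        ultimately have "generate G {z} \<subset> C" using False by blast
        moreover have fC: "finite C" using fin C_def by simp
        ultimately have "card (generate G {z}) < card C" by (rule psubset_card_mono[rotated])
        then have gt: "p < card C" using oz ord_card_gen z by simp
        have "card C dvd card (carrier G)"
          using card_subgroup_dvd[OF subgroup_self sC] C_def by blast
        then have "card C dvd p * p" using o by (simp add: order_def)
        then have "card C = p * p" using gt dvd_p2[OF p] prime_gt_0_nat[OF p] by fastforce
        then have "card C = card (carrier G)" using o by (simp add: order_def)
        then have "C = carrier G" by (intro card_subset_eq[OF fin]) (auto simp: C_def)
        have H': "x \<otimes> g = g \<otimes> x" if g: "g \<in> carrier G" for g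
        proof -
          have "g \<in> C" using \<open>C = carrier G\<close> g by simp
          then show "x \<otimes> g = g \<otimes> x" unfolding C_def by simp
        qed
        then show ?thesis using x unfolding centre_def by blast
      qed
    qed
  qed
  then show ?thesis by (rule centre_full_comm)
qed

lemma ord_dvd_subgroup:
  assumes H: "subgroup H G" and x: "x \<in> H"
  shows "ord x dvd card H"
proof -
  have xc: "x \<in> carrier G" by (rule subgroup.mem_carrier[OF H x])
  have "{x} \<subseteq> H" using x by simp
  then have "generate G {x} \<subseteq> H" using H by (rule generate_subgroup_incl)
  then have "card (generate G {x}) dvd card H"
    using card_subgroup_dvd[OF H generate_is_subgroup] xc by simp
  then show ?thesis using ord_card_gen[OF xc] by simp
qed

lemma swap_eq:
  assumes u: "u \<in> carrier G" and v: "v \<in> carrier G" and u': "u' \<in> carrier G" and v': "v' \<in> carrier G"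
    and eq: "u \<otimes> v = u' \<otimes> v'"
  shows "inv u' \<otimes> u = v' \<otimes> inv v"
proof -
  have "u' \<otimes> (v' \<otimes> inv v) = (u \<otimes> v) \<otimes> inv v" using eq u v u' v' by (simp add: m_assoc)
  also have "\<dots> = u" using u v by (simp add: m_assoc)
  finally have "u = u' \<otimes> (v' \<otimes> inv v)" by simp
  then show ?thesis using inv_solve_left'[of "v' \<otimes> inv v" u' u] u v u' v' by simp
qed

lemma inv_cancel_l: "x \<in> carrier G \<Longrightarrow> y \<in> carrier G \<Longrightarrow> inv x \<otimes> (x \<otimes> y) = y"
  by (simp add: m_assoc[symmetric])

lemma conj_pow:
  assumes x: "x \<in> carrier G" and a: "a \<in> carrier G"
  shows "(x \<otimes> a \<otimes> inv x) [^] (n::nat) = x \<otimes> a [^] n \<otimes> inv x"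
proof (induction n)
  case 0
  then show ?case using x by simp
next
  case (Suc n)
  have "(x \<otimes> a \<otimes> inv x) [^] Suc n = (x \<otimes> a [^] n \<otimes> inv x) \<otimes> (x \<otimes> a \<otimes> inv x)"
    using Suc by (simp add: nat_pow_Suc)
  also have "\<dots> = x \<otimes> (a [^] n \<otimes> (inv x \<otimes> x) \<otimes> a) \<otimes> inv x" using x a by (simp add: m_assoc inv_cancel_l)
  also have "\<dots> = x \<otimes> a [^] Suc n \<otimes> inv x" using x a by (simp add: nat_pow_Suc)
  finally show ?case .
qed

lemma conj_one:
  assumes x: "x \<in> carrier G" and y: "y \<in> carrier G"
  shows "x \<otimes> y \<otimes> inv x = \<one> \<longleftrightarrow> y = \<one>"
proof
  assume "x \<otimes> y \<otimes> inv x = \<one>"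
  then have "x \<otimes> y \<otimes> inv x \<otimes> x = x" using x by simp
  then have "x \<otimes> y = x \<otimes> \<one>" using x y by (simp add: m_assoc)
  then show "y = \<one>" using x y l_cancel by blast
qed (use x in simp)

lemma ord_conj:
  assumes x: "x \<in> carrier G" and a: "a \<in> carrier G"
  shows "ord (x \<otimes> a \<otimes> inv x) = ord a"
proof -
  have c: "x \<otimes> a \<otimes> inv x \<in> carrier G" using x a by simp
  have "(x \<otimes> a \<otimes> inv x) [^] n = \<one> \<longleftrightarrow> ord a dvd n" for n :: nat
    using conj_pow[OF x a, of n] conj_one[OF x, of "a [^] n"] pow_eq_id[OF a, of n] a by simp
  then show ?thesis using ord_unique[OF c] by blast
qed

end

locale pqg = group G for G (structure) +
  fixes p q :: nat
  assumes pp: "Factorial_Ring.prime p" and qp: "Factorial_Ring.prime q"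
    and ordG: "order G = p * q" and qlp: "q < p" and ncomm: "\<not> comm_group G"
begin

lemma fin: "finite (carrier G)"
  using ordG pp qp order_gt_0_iff_finite prime_gt_0_nat by (metis nat_0_less_mult_iff)

lemma pq_coprime: "coprime p q"
  using pp qp qlp primes_coprime by (metis less_irrefl)

lemma big_subgroup:
  assumes H: "subgroup H G" and dp: "p dvd card H" and dq: "q dvd card H"
  shows "H = carrier G"
proof -
  have sub: "H \<subseteq> carrier G" using H subgroup.subset by blast
  have "card H dvd card (carrier G)" using card_subgroup_dvd[OF subgroup_self H sub] .
  then have d1: "card H dvd p * q" using ordG by (simp add: order_def)
  have d2: "p * q dvd card H" using dp dq pq_coprime by (rule divides_mult)
  have "card H = card (carrier G)" using d1 d2 ordG by (simp add: order_def dvd_antisym)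
  then show ?thesis using card_subset_eq[OF fin sub] by simp
qed

lemma centralizer_full:
  assumes x: "x \<in> carrier G" and a: "a \<in> carrier G" "ord a = p" and b: "b \<in> carrier G" "ord b = q"
    and ax: "a \<otimes> x = x \<otimes> a" and bx: "b \<otimes> x = x \<otimes> b"
  shows "x \<in> centre G"
proof -
  define C where "C = {g \<in> carrier G. g \<otimes> x = x \<otimes> g}"
  have sC: "subgroup C G" unfolding C_def by (rule centralizer_subgroup[OF x])
  have "p dvd card C" using ord_dvd_subgroup[OF sC, of a] a ax unfolding C_def by simp
  moreover have "q dvd card C" using ord_dvd_subgroup[OF sC, of b] b bx unfolding C_def by simp
  ultimately have "C = carrier G" using big_subgroup[OF sC] by simp
  have "x \<otimes> g = g \<otimes> x" if g: "g \<in> carrier G" for g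
  proof -
    have "g \<in> C" using \<open>C = carrier G\<close> g by simp
    then show ?thesis unfolding C_def by simp
  qed
  then show ?thesis using x unfolding centre_def by blast
qed

lemma commute_false:
  assumes a: "a \<in> carrier G" "ord a = p" and b: "b \<in> carrier G" "ord b = q"
    and c: "a \<otimes> b = b \<otimes> a"
  shows False
proof -
  have "a \<in> centre G" using centralizer_full[OF a(1) a b] c by simp
  moreover have "b \<in> centre G" using centralizer_full[OF b(1) a b] c by simp
  ultimately have "centre G = carrier G"
    using big_subgroup[OF centre_subgroup] ord_dvd_subgroup[OF centre_subgroup] a b by metis
  then show False using centre_full_comm ncomm by blast
qed

end

context pqg begin

lemma gen_pow_mem: "a \<in> carrier G \<Longrightarrow> a [^] (n::nat) \<in> generate G {a}"
  using generate_pow_on_finite_carrier[OF fin, of a] by auto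

lemma conj_in:
  assumes a: "a \<in> carrier G" "ord a = p" and x: "x \<in> carrier G"
  shows "x \<otimes> a \<otimes> inv x \<in> generate G {a}"
proof (rule ccontr)
  define c where "c = x \<otimes> a \<otimes> inv x"
  define P where "P = generate G {a}"
  assume "x \<otimes> a \<otimes> inv x \<notin> generate G {a}"
  then have nc: "c \<notin> P" unfolding c_def P_def .
  have c: "c \<in> carrier G" unfolding c_def using x a by simp
  have oc: "ord c = p" unfolding c_def using ord_conj[OF x a(1)] a(2) by simp
  have sP: "subgroup P G" unfolding P_def by (rule generate_is_subgroup) (use a in simp)
  have sC: "subgroup (generate G {c}) G" by (rule generate_is_subgroup) (use c in simp)
  define f where "f = (\<lambda>(i::nat, j::nat). a [^] i \<otimes> c [^] j)"
  have inj: "inj_on f ({..<p} \<times> {..<p})"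
  proof (rule inj_onI)
    fix u v assume u: "u \<in> {..<p} \<times> {..<p}" and v: "v \<in> {..<p} \<times> {..<p}" and e: "f u = f v"
    obtain i j where uij: "u = (i, j)" by (cases u)
    obtain i' j' where vij: "v = (i', j')" by (cases v)
    have r: "i < p" "j < p" "i' < p" "j' < p" using u v uij vij by auto
    have eq: "a [^] i \<otimes> c [^] j = a [^] i' \<otimes> c [^] j'" using e uij vij f_def by simp
    define y where "y = inv (a [^] i') \<otimes> a [^] i"
    have y2: "y = c [^] j' \<otimes> inv (c [^] j)" unfolding y_def using swap_eq[OF _ _ _ _ eq] a c by simp
    have yP: "y \<in> P" unfolding y_def P_def
      using gen_pow_mem[OF a(1)] subgroup.m_closed[OF sP] subgroup.m_inv_closed[OF sP] P_def by simp
    have yC: "y \<in> generate G {c}" unfolding y2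
      using gen_pow_mem[OF c] subgroup.m_closed[OF sC] subgroup.m_inv_closed[OF sC] by simp
    have y1: "y = \<one>"
    proof (rule ccontr)
      assume "y \<noteq> \<one>"
      then have "generate G {y} = generate G {c}" using prime_gen_eq[OF fin c] oc pp yC by simp
      moreover have "generate G {y} \<subseteq> P" unfolding P_def using gen_mem_sub[OF a(1)] yP P_def by simp
      moreover have "c \<in> generate G {c}" by (rule generate.incl) simp
      ultimately show False using nc by blast
    qed
    have "c [^] j' = \<one> \<otimes> c [^] j" using y1 y2 inv_solve_right'[of "\<one>" "c [^] j'" "c [^] j"] c by simp
    then have "c [^] j' = c [^] j" using c by simp
    then have "[j' = j] (mod p)" using pow_eq_cong[OF c] oc by simp
    then have jj: "j' = j" using r cong_less_modulus_unique_nat by blast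
    have "a [^] i = a [^] i' \<otimes> \<one>" using y1 y_def inv_solve_left'[of "\<one>" "a [^] i'" "a [^] i"] a by simp
    then have "a [^] i = a [^] i'" using a by simp
    then have "[i = i'] (mod p)" using pow_eq_cong[OF a(1)] a(2) by simp
    then have "i = i'" using r cong_less_modulus_unique_nat by blast
    then show "u = v" using uij vij jj by simp
  qed
  have img: "f ` ({..<p} \<times> {..<p}) \<subseteq> carrier G" using a c by (auto simp: f_def)
  have "card (f ` ({..<p} \<times> {..<p})) = p * p" using card_image[OF inj] by simp
  moreover have "card (f ` ({..<p} \<times> {..<p})) \<le> card (carrier G)" by (rule card_mono[OF fin img])
  ultimately have "p * p \<le> p * q" using ordG by (simp add: order_def)
  then show False using qlp pp prime_gt_0_nat by simp
qed

lemma P_normal: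
  assumes a: "a \<in> carrier G" "ord a = p"
  shows "generate G {a} \<lhd> G"
proof -
  have sP: "subgroup (generate G {a}) G" by (rule generate_is_subgroup) (use a in simp)
  have "x \<otimes> h \<otimes> inv x \<in> generate G {a}" if x: "x \<in> carrier G" and h: "h \<in> generate G {a}" for x h
  proof -
    obtain n :: nat where hn: "h = a [^] n" using h generate_pow_on_finite_carrier[OF fin a(1)] by auto
    obtain k :: nat where ck: "x \<otimes> a \<otimes> inv x = a [^] k"
      using conj_in[OF a x] generate_pow_on_finite_carrier[OF fin a(1)] by auto
    have "x \<otimes> h \<otimes> inv x = (x \<otimes> a \<otimes> inv x) [^] n" using conj_pow[OF x a(1)] hn by simp
    also have "\<dots> = a [^] (k * n)" using ck a by (simp add: nat_pow_pow)
    finally show ?thesis using gen_pow_mem[OF a(1)] by simp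
  qed
  then show ?thesis using normal_inv_iff sP by blast
qed

end

context group begin

lemma inv_cancel_l2: "x \<in> carrier G \<Longrightarrow> y \<in> carrier G \<Longrightarrow> x \<otimes> (inv x \<otimes> y) = y"
  by (simp add: m_assoc[symmetric])

lemma prime_order_cyclic:
  assumes fin: "finite (carrier G)" and pr: "Factorial_Ring.prime (order G)"
  shows "cyclic_group G"
proof -
  have "card (carrier G) \<ge> 2" using pr prime_ge_2_nat by (simp add: order_def)
  have "\<not> carrier G \<subseteq> {\<one>}"
  proof
    assume "carrier G \<subseteq> {\<one>}"
    then have "card (carrier G) \<le> card {\<one>}" by (rule card_mono[rotated]) simp
    then show False using \<open>card (carrier G) \<ge> 2\<close> by simp
  qed
  then obtain x where x: "x \<in> carrier G" "x \<noteq> \<one>" by blast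
  have "ord x dvd order G" by (rule ord_dvd_group_order[OF x(1)])
  moreover have "ord x \<noteq> 1" using ord_eq_1[OF x(1)] x(2) by simp
  ultimately have "ord x = order G" using pr unfolding prime_nat_iff by blast
  then have "card (generate G {x}) = card (carrier G)" using ord_card_gen[OF x(1)] by (simp add: order_def)
  then have "generate G {x} = carrier G" using card_subset_eq[OF fin gen_sub[OF x(1)]] by simp
  then have "subgroup_generated G {x} = G" using x(1) by (simp add: subgroup_generated_def)
  then show ?thesis unfolding cyclic_group_def using x(1) by blast
qed

end

context pqg begin

lemma exists_rel:
  "\<exists>a b k. a \<in> carrier G \<and> ord a = p \<and> b \<in> carrier G \<and> ord b = q \<and> k < p \<and> a \<otimes> b = b \<otimes> a [^] k"
proof -
  obtain a where a: "a \<in> carrier G" "ord a = p" using elem_prime_ord[OF fin pp] ordG by auto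
  obtain b where b: "b \<in> carrier G" "ord b = q" using elem_prime_ord[OF fin qp] ordG by auto
  have ib: "inv b \<in> carrier G" using b by simp
  have "inv b \<otimes> a \<otimes> inv (inv b) \<in> generate G {a}" by (rule conj_in[OF a ib])
  then obtain k0 :: nat where k0: "inv b \<otimes> a \<otimes> b = a [^] k0"
    using generate_pow_on_finite_carrier[OF fin a(1)] b by auto
  define k where "k = k0 mod p"
  have kp: "k < p" unfolding k_def using pp prime_gt_0_nat by simp
  have ak: "a [^] k0 = a [^] k" unfolding k_def using pow_mod_ord[OF a(1)] a(2) by simp
  have "a \<otimes> b = b \<otimes> (inv b \<otimes> a \<otimes> b)" using a b by (simp add: m_assoc inv_cancel_l2)
  also have "\<dots> = b \<otimes> a [^] k" using k0 ak by simp
  finally show ?thesis using a b kp by blast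
qed

end

locale pqab = pqg +
  fixes a b :: 'a and k :: nat
  assumes a: "a \<in> carrier G" and oa: "ord a = p" and b: "b \<in> carrier G" and ob: "ord b = q"
    and kp: "k < p" and rel: "a \<otimes> b = b \<otimes> a [^] k"
begin

lemma R0: "a [^] (y::nat) \<otimes> b = b \<otimes> a [^] (y * k)"
proof (induction y)
  case 0
  then show ?case using b by simp
next
  case (Suc y)
  have "a [^] Suc y \<otimes> b = a [^] y \<otimes> (a \<otimes> b)" using a b by (simp add: nat_pow_Suc m_assoc)
  also have "\<dots> = (a [^] y \<otimes> b) \<otimes> a [^] k" using a b rel by (simp add: m_assoc)
  also have "\<dots> = b \<otimes> (a [^] (y * k) \<otimes> a [^] k)" using Suc a b by (simp add: m_assoc)
  also have "\<dots> = b \<otimes> a [^] (Suc y * k)" using a by (simp add: nat_pow_mult add.commute)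
  finally show ?case .
qed

lemma R1: "a [^] (x::nat) \<otimes> b [^] (n::nat) = b [^] n \<otimes> a [^] (x * k ^ n)"
proof (induction n arbitrary: x)
  case 0
  then show ?case using a by simp
next
  case (Suc n)
  have "a [^] x \<otimes> b [^] Suc n = (a [^] x \<otimes> b [^] n) \<otimes> b" using a b by (simp add: nat_pow_Suc m_assoc)
  also have "\<dots> = b [^] n \<otimes> (a [^] (x * k ^ n) \<otimes> b)" using Suc a b by (simp add: m_assoc)
  also have "\<dots> = b [^] n \<otimes> (b \<otimes> a [^] (x * k ^ n * k))" using R0 by simp
  also have "\<dots> = b [^] Suc n \<otimes> a [^] (x * k ^ Suc n)" using a b
    by (simp add: nat_pow_Suc m_assoc[symmetric] mult_ac)
  finally show ?case .
qed

lemma kq: "[k ^ q = 1] (mod p)"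
proof -
  have "a [^] (1::nat) \<otimes> b [^] q = b [^] q \<otimes> a [^] (1 * k ^ q)" by (rule R1)
  moreover have "b [^] q = \<one>" using pow_ord_eq_1[OF b] ob by simp
  ultimately have "a = a [^] (k ^ q)" using a b by simp
  then have e: "a [^] (1::nat) = a [^] (k ^ q)" using a by simp
  have "[1 = k ^ q] (mod ord a)" by (rule iffD1[OF pow_eq_cong[OF a, of 1 "k^q"] e])
  then have "[1 = k ^ q] (mod p)" using oa by simp
  then show ?thesis by (rule cong_sym)
qed

lemma k_ne1: "k \<noteq> 1"
proof
  assume "k = 1"
  then have "a \<otimes> b = b \<otimes> a" using rel a by simp
  then show False using commute_false[OF a oa b ob] by simp
qed

lemma k_pos: "0 < k"
proof (rule ccontr)
  assume "\<not> 0 < k"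
  then have "k = 0" by simp
  then have "[0 = 1] (mod p)" using kq qp prime_gt_0_nat by (simp add: zero_power)
  then show False using prime_gt_1_nat[OF pp] by (simp add: cong_def)
qed

lemma ord_k: "Pocklington.ord p k = q"
proof -
  have d: "Pocklington.ord p k dvd q" using kq ord_divides by blast
  have "Pocklington.ord p k \<noteq> 1"
  proof
    assume "Pocklington.ord p k = 1"
    then have "[k ^ 1 = 1] (mod p)" using ord_works[of k p] by simp
    then have "k mod p = 1" using prime_gt_1_nat[OF pp] by (simp add: cong_def)
    then show False using kp k_ne1 by simp
  qed
  then show ?thesis using d qp unfolding prime_nat_iff by blast
qed

lemma coprime_k: "coprime p (k - 1)"
proof (rule prime_imp_coprime[OF pp])
  show "\<not> p dvd k - 1"
  proof
    assume "p dvd k - 1"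
    moreover have "0 < k - 1" using k_pos k_ne1 by simp
    ultimately have "p \<le> k - 1" by (rule dvd_imp_le)
    then show False using kp by simp
  qed
qed

lemma params: "Gmnk_params p q k"
  unfolding Gmnk_params_def using pp qp prime_gt_0_nat k_pos coprime_k ord_k by simp

end

context pqab begin

definition psi :: "int \<times> int \<Rightarrow> 'a" where
  "psi = (\<lambda>(i, j). a [^] nat i \<otimes> b [^] nat j)"

lemma Gmnk_carrier_nat:
  assumes "x \<in> carrier (Gmnk p q k)"
  shows "\<exists>i j. x = (int i, int j) \<and> i < p \<and> j < q"
proof -
  obtain i0 j0 where x: "x = (i0, j0)" by (cases x)
  have r: "0 \<le> i0" "i0 < int p" "0 \<le> j0" "j0 < int q" using assms x by (auto simp: Gmnk_def)
  show ?thesis by (intro exI[of _ "nat i0"] exI[of _ "nat j0"]) (use x r in auto)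
qed

lemma psi_nat: "psi (int i, int j) = a [^] i \<otimes> b [^] j"
  by (simp add: psi_def)

lemma psi_carrier: "psi x \<in> carrier G"
  using a b by (auto simp: psi_def split: prod.splits)

lemma psi_mult_nat:
  assumes jq: "j < q"
  shows "a [^] ((i + s * k ^ (q - j)) mod p) \<otimes> b [^] ((j + t) mod q) = (a [^] i \<otimes> b [^] j) \<otimes> (a [^] s \<otimes> b [^] t)"
proof -
  have e1: "a [^] ((i + s * k ^ (q - j)) mod p) = a [^] i \<otimes> a [^] (s * k ^ (q - j))"
    using pow_mod_ord[OF a, of "i + s * k ^ (q - j)"] oa nat_pow_mult[OF a] by simp
  have e2: "b [^] ((j + t) mod q) = b [^] j \<otimes> b [^] t"
    using pow_mod_ord[OF b, of "j + t"] ob nat_pow_mult[OF b] by simp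
  have e3a: "a [^] (s * k ^ (q - j)) \<otimes> b [^] j = b [^] j \<otimes> a [^] (s * k ^ (q - j) * k ^ j)" by (rule R1)
  have e3b: "s * k ^ (q - j) * k ^ j = s * k ^ q" using jq by (simp add: mult.assoc power_add[symmetric])
  have "[s * k ^ q = s * 1] (mod p)" using kq by (intro cong_mult cong_refl)
  then have e3c: "a [^] (s * k ^ q) = a [^] s" using pow_eq_cong[OF a] oa by simp
  have e3: "a [^] (s * k ^ (q - j)) \<otimes> b [^] j = b [^] j \<otimes> a [^] s" using e3a e3b e3c by simp
  have "a [^] ((i + s * k ^ (q - j)) mod p) \<otimes> b [^] ((j + t) mod q)
      = a [^] i \<otimes> (a [^] (s * k ^ (q - j)) \<otimes> b [^] j) \<otimes> b [^] t" using e1 e2 a b by (simp add: m_assoc)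
  also have "\<dots> = (a [^] i \<otimes> b [^] j) \<otimes> (a [^] s \<otimes> b [^] t)" using e3 a b by (simp add: m_assoc)
  finally show ?thesis .
qed

lemma Gmnk_mult_nat:
  assumes "j < q"
  shows "(int i, int j) \<otimes>\<^bsub>Gmnk p q k\<^esub> (int s, int t) = (int ((i + s * k ^ (q - j)) mod p), int ((j + t) mod q))"
proof -
  have n: "nat (int q - int j) = q - j" using assms by simp
  show ?thesis unfolding Gmnk_def using n by (simp add: of_nat_mod)
qed

lemma psi_hom: "psi \<in> hom (Gmnk p q k) G"
proof (rule homI)
  fix x assume "x \<in> carrier (Gmnk p q k)" then show "psi x \<in> carrier G" using psi_carrier by simp
next
  fix x y assume x: "x \<in> carrier (Gmnk p q k)" and y: "y \<in> carrier (Gmnk p q k)"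
  obtain i j where ij: "x = (int i, int j)" "i < p" "j < q" using Gmnk_carrier_nat[OF x] by blast
  obtain s t where st: "y = (int s, int t)" "s < p" "t < q" using Gmnk_carrier_nat[OF y] by blast
  have "psi (x \<otimes>\<^bsub>Gmnk p q k\<^esub> y) = a [^] ((i + s * k ^ (q - j)) mod p) \<otimes> b [^] ((j + t) mod q)"
    using ij st Gmnk_mult_nat[OF ij(3)] psi_nat by simp
  also have "\<dots> = psi x \<otimes> psi y" using psi_mult_nat[OF ij(3)] ij st psi_nat by simp
  finally show "psi (x \<otimes>\<^bsub>Gmnk p q k\<^esub> y) = psi x \<otimes> psi y" .
qed

lemma psi_inj: "inj_on psi (carrier (Gmnk p q k))"
proof (rule inj_onI)
  fix x y assume x: "x \<in> carrier (Gmnk p q k)" and y: "y \<in> carrier (Gmnk p q k)" and e: "psi x = psi y"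
  obtain i j where ij: "x = (int i, int j)" "i < p" "j < q" using Gmnk_carrier_nat[OF x] by blast
  obtain s t where st: "y = (int s, int t)" "s < p" "t < q" using Gmnk_carrier_nat[OF y] by blast
  have eq: "a [^] i \<otimes> b [^] j = a [^] s \<otimes> b [^] t" using e ij st psi_nat by simp
  define z where "z = inv (a [^] s) \<otimes> a [^] i"
  have z2: "z = b [^] t \<otimes> inv (b [^] j)" unfolding z_def using swap_eq[OF _ _ _ _ eq] a b by simp
  have sA: "subgroup (generate G {a}) G" by (rule generate_is_subgroup) (use a in simp)
  have sB: "subgroup (generate G {b}) G" by (rule generate_is_subgroup) (use b in simp)
  have zA: "z \<in> generate G {a}" unfolding z_def
    using gen_pow_mem[OF a] subgroup.m_closed[OF sA] subgroup.m_inv_closed[OF sA] by simp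
  have zB: "z \<in> generate G {b}" unfolding z2
    using gen_pow_mem[OF b] subgroup.m_closed[OF sB] subgroup.m_inv_closed[OF sB] by simp
  have "ord z dvd p" using gen_mem_ord_dvd[OF a zA] oa by simp
  moreover have "ord z dvd q" using gen_mem_ord_dvd[OF b zB] ob by simp
  ultimately have "ord z = 1" using pq_coprime coprime_common_divisor_nat by blast
  moreover have zc: "z \<in> carrier G" unfolding z_def using a by simp
  ultimately have z1: "z = \<one>" using ord_eq_1 by blast
  have "b [^] t = \<one> \<otimes> b [^] j" using z1 z2 inv_solve_right'[of "\<one>" "b [^] t" "b [^] j"] b by simp
  then have "b [^] t = b [^] j" using b by simp
  then have "[t = j] (mod q)" using pow_eq_cong[OF b] ob by simp
  then have tj: "t = j" using st ij cong_less_modulus_unique_nat by blast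
  have "a [^] i = a [^] s \<otimes> \<one>" using z1 z_def inv_solve_left'[of "\<one>" "a [^] s" "a [^] i"] a by simp
  then have "a [^] i = a [^] s" using a by simp
  then have "[i = s] (mod p)" using pow_eq_cong[OF a] oa by simp
  then have "i = s" using st ij cong_less_modulus_unique_nat by blast
  then show "x = y" using ij st tj by simp
qed

lemma card_Gmnk: "card (carrier (Gmnk p q k)) = p * q"
  by (simp add: Gmnk_def card_cartesian_product)

lemma psi_image: "psi ` carrier (Gmnk p q k) = carrier G"
proof -
  have img: "psi ` carrier (Gmnk p q k) \<subseteq> carrier G" using psi_carrier by auto
  have "card (psi ` carrier (Gmnk p q k)) = p * q" using card_image[OF psi_inj] card_Gmnk by simp
  then have "card (psi ` carrier (Gmnk p q k)) = card (carrier G)" using ordG by (simp add: order_def)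
  then show ?thesis using card_subset_eq[OF fin img] by simp
qed

lemma psi_bij: "bij_betw psi (carrier (Gmnk p q k)) (carrier G)"
  unfolding bij_betw_def using psi_inj psi_image by simp

lemma Gmnk_closed:
  assumes "x \<in> carrier (Gmnk p q k)" "y \<in> carrier (Gmnk p q k)"
  shows "x \<otimes>\<^bsub>Gmnk p q k\<^esub> y \<in> carrier (Gmnk p q k)"
proof -
  have "0 < int p" "0 < int q" using pp qp prime_gt_0_nat by auto
  then show ?thesis by (auto simp: Gmnk_def split: prod.splits)
qed

lemma iso_G: "G \<cong> Gmnk p q k"
proof -
  define phi where "phi = inv_into (carrier (Gmnk p q k)) psi"
  have bij: "bij_betw phi (carrier G) (carrier (Gmnk p q k))" unfolding phi_def by (rule bij_betw_inv_into[OF psi_bij])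
  have hom: "phi \<in> hom G (Gmnk p q k)"
  proof (rule homI)
    fix x assume "x \<in> carrier G" then show "phi x \<in> carrier (Gmnk p q k)" using bij bij_betwE by blast
  next
    fix x y assume x: "x \<in> carrier G" and y: "y \<in> carrier G"
    have px: "phi x \<in> carrier (Gmnk p q k)" using bij bij_betwE x by blast
    have py: "phi y \<in> carrier (Gmnk p q k)" using bij bij_betwE y by blast
    have ppx: "psi (phi x) = x" unfolding phi_def using bij_betw_inv_into_right[OF psi_bij x] .
    have ppy: "psi (phi y) = y" unfolding phi_def using bij_betw_inv_into_right[OF psi_bij y] .
    have "inv_into (carrier (Gmnk p q k)) psi (x \<otimes> y) = phi x \<otimes>\<^bsub>Gmnk p q k\<^esub> phi y"
    proof (rule inv_into_f_eq)
      show "inj_on psi (carrier (Gmnk p q k))" by (rule psi_inj)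
      show "phi x \<otimes>\<^bsub>Gmnk p q k\<^esub> phi y \<in> carrier (Gmnk p q k)" by (rule Gmnk_closed[OF px py])
      show "psi (phi x \<otimes>\<^bsub>Gmnk p q k\<^esub> phi y) = x \<otimes> y" using hom_mult[OF psi_hom px py] ppx ppy by simp
    qed
    then show "phi (x \<otimes> y) = phi x \<otimes>\<^bsub>Gmnk p q k\<^esub> phi y" unfolding phi_def .
  qed
  then show ?thesis unfolding is_iso_def iso_def using bij hom by blast
qed

end

context pqab begin

lemma centre_trivial: "centre G = {\<one>}"
proof
  show "{\<one>} \<subseteq> centre G" unfolding centre_def by auto
  show "centre G \<subseteq> {\<one>}"
  proof
    fix z assume zc: "z \<in> centre G"
    then have z: "z \<in> carrier G" unfolding centre_def by auto
    have za: "z \<otimes> a = a \<otimes> z" using zc a unfolding centre_def by auto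
    have zb: "z \<otimes> b = b \<otimes> z" using zc b unfolding centre_def by auto
    have "z \<in> psi ` carrier (Gmnk p q k)" using psi_image z by simp
    then obtain x where x2: "z = psi x" and x1: "x \<in> carrier (Gmnk p q k)" by (rule imageE)
    obtain i j where ij: "x = (int i, int j)" "i < p" "j < q" using Gmnk_carrier_nat[OF x1] by blast
    have zij: "z = a [^] i \<otimes> b [^] j" using x2 ij(1) psi_nat by simp
    have "a [^] i \<otimes> (b [^] j \<otimes> a) = a [^] i \<otimes> (a \<otimes> b [^] j)"
    proof -
      have "a [^] i \<otimes> (b [^] j \<otimes> a) = z \<otimes> a" using zij a b by (simp add: m_assoc)
      also have "\<dots> = a \<otimes> z" by (rule za)
      also have "\<dots> = (a \<otimes> a [^] i) \<otimes> b [^] j" using zij a b by (simp add: m_assoc)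
      also have "\<dots> = (a [^] i \<otimes> a) \<otimes> b [^] j"
      proof -
        have "a \<otimes> a [^] i = a [^] Suc i" by (rule nat_pow_Suc2[OF a, symmetric])
        also have "\<dots> = a [^] i \<otimes> a" by (rule nat_pow_Suc)
        finally show ?thesis by simp
      qed
      also have "\<dots> = a [^] i \<otimes> (a \<otimes> b [^] j)" using a b by (simp add: m_assoc)
      finally show ?thesis .
    qed
    then have "b [^] j \<otimes> a = a \<otimes> b [^] j" using l_cancel[of "a [^] i" "b [^] j \<otimes> a" "a \<otimes> b [^] j"] a b by simp
    also have "\<dots> = b [^] j \<otimes> a [^] (k ^ j)" using R1[of 1 j] a by simp
    finally have "b [^] j \<otimes> a = b [^] j \<otimes> a [^] (k ^ j)" .
    then have "a = a [^] (k ^ j)" using l_cancel[of "b [^] j" a "a [^] (k ^ j)"] a b by simp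
    then have e: "a [^] (1::nat) = a [^] (k ^ j)" using a by simp
    have "[1 = k ^ j] (mod ord a)" by (rule iffD1[OF pow_eq_cong[OF a, of 1 "k^j"] e])
    then have "[k ^ j = 1] (mod p)" using oa cong_sym by simp
    then have "q dvd j" using ord_divides[of k j p] ord_k by simp
    then have j0: "j = 0" using dvd_imp_le[of q j] ij(3) by (cases "j = 0") auto
    then have zi: "z = a [^] i" using zij a by simp
    have "b \<otimes> a [^] (i * k) = b \<otimes> a [^] i" using R0[of i] zb zi by simp
    then have "a [^] (i * k) = a [^] i" using l_cancel[of b "a [^] (i * k)" "a [^] i"] a b by simp
    then have "[i * k = i] (mod p)" using pow_eq_cong[OF a] oa by simp
    moreover have "i \<le> i * k" using k_pos by simp
    ultimately have "p dvd i * k - i" using cong_altdef_nat by blast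
    moreover have "i * k - i = i * (k - 1)" by (simp add: diff_mult_distrib2)
    ultimately have "p dvd i * (k - 1)" by simp
    moreover have "\<not> p dvd k - 1"
    proof
      assume "p dvd k - 1"
      moreover have "0 < k - 1" using k_pos k_ne1 by simp
      ultimately have "p \<le> k - 1" by (rule dvd_imp_le)
      then show False using kp by simp
    qed
    ultimately have "p dvd i" using pp prime_dvd_mult_iff by blast
    then have "i = 0" using dvd_imp_le[of p i] ij(2) by (cases "i = 0") auto
    then show "z \<in> {\<one>}" using zi by simp
  qed
qed

lemma metacyclic_G: "metacyclic G"
proof -
  let ?N = "generate G {a}"
  have nN: "?N \<lhd> G" by (rule P_normal[OF a oa])
  have "subgroup_generated G {a} = G\<lparr>carrier := ?N\<rparr>" using a by (simp add: subgroup_generated_def)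
  then have c1: "cyclic_group (G\<lparr>carrier := ?N\<rparr>)" using cyclic_group_generated[of a] by simp
  have gM: "group (G Mod ?N)" by (rule normal.factorgroup_is_group[OF nN])
  have sN: "subgroup ?N G" by (rule generate_is_subgroup) (use a in simp)
  have "card (rcosets ?N) * card ?N = order G" by (rule lagrange[OF sN])
  moreover have "card ?N = p" using ord_card_gen[OF a] oa by simp
  ultimately have "card (rcosets ?N) * p = p * q" using ordG by simp
  then have cq: "card (rcosets ?N) = q" using pp prime_gt_0_nat by simp
  have oM: "order (G Mod ?N) = q" using cq by (simp add: order_def FactGroup_def)
  have finM: "finite (carrier (G Mod ?N))" by (rule card_ge_0_finite) (use oM prime_gt_0_nat[OF qp] in \<open>simp add: order_def\<close>)
  have c2: "cyclic_group (G Mod ?N)" by (rule group.prime_order_cyclic[OF gM finM]) (use oM qp in simp)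
  show ?thesis unfolding metacyclic_def using nN c1 c2 by blast
qed

end

context pqab begin

lemma p_ndvd_k1: "\<not> int p dvd int k - 1"
proof
  assume "int p dvd int k - 1"
  moreover have "int k - 1 = int (k - 1)" using k_pos by simp
  ultimately have "int p dvd int (k - 1)" by (simp only:)
  then have "p dvd k - 1" by (simp only: int_dvd_int_iff)
  moreover have "0 < k - 1" using k_pos k_ne1 by simp
  ultimately have "p \<le> k - 1" by (intro dvd_imp_le)
  then show False using kp by simp
qed

lemma q_gt1: "1 < q" using qp prime_gt_1_nat by simp

lemma R_complete: "Sigma_complete p q k (Rset p q k)"
proof (rule Sigma_complete_prime[OF pp])
  have "kk p k 0 \<in> Rset p q k" unfolding Rset_def using q_gt1 by auto
  then show "0 \<in> Rset p q k" by (simp add: kk_def)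
  show "kk p k 1 \<in> Rset p q k" unfolding Rset_def using q_gt1 by auto
  show "\<not> int p dvd kk p k 1" unfolding kk_def using p_ndvd_k1 dvd_mod_iff[of "int p" "int p" "int k - 1"] by simp
qed

lemma L_complete: "Sigma_complete p q k (Lset p q k)"
proof (rule Sigma_complete_prime[OF pp])
  have "(- kk p k 0) mod int p \<in> Lset p q k" unfolding Lset_def using q_gt1 by auto
  then show "0 \<in> Lset p q k" by (simp add: kk_def)
  show "(- kk p k 1) mod int p \<in> Lset p q k" unfolding Lset_def using q_gt1 by auto
  have n1: "\<not> int p dvd kk p k 1" unfolding kk_def using p_ndvd_k1 dvd_mod_iff[of "int p" "int p" "int k - 1"] by simp
  have "int p dvd (- kk p k 1) mod int p \<longleftrightarrow> int p dvd - kk p k 1" by (rule dvd_mod_iff) simp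
  also have "\<dots> \<longleftrightarrow> int p dvd kk p k 1" by (rule dvd_minus_iff)
  finally show "\<not> int p dvd (- kk p k 1) mod int p" using n1 by simp
qed

end

context pqg begin

lemma main:
  "metacyclic G \<and> centre G = {\<one>} \<and>
   (\<exists>m n k. Gmnk_params m n k \<and> G \<cong> Gmnk m n k \<and>
            Sigma_complete m n k (Rset m n k) \<and> Sigma_complete m n k (Lset m n k))"
proof -
  obtain a b k where abk: "a \<in> carrier G" "ord a = p" "b \<in> carrier G" "ord b = q" "k < p" "a \<otimes> b = b \<otimes> a [^] k"
    using exists_rel by blast
  interpret X: pqab G p q a b k
    by (intro pqab.intro pqg.intro is_group pqg_axioms pqab_axioms.intro abk)
  show ?thesis using X.metacyclic_G X.centre_trivial X.params X.iso_G X.R_complete X.L_complete by blast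
qed

end

theorem theorem6p6:
  fixes G :: "('a, 'b) monoid_scheme" and p q :: nat
  assumes "group G"
    and "Factorial_Ring.prime p" and "Factorial_Ring.prime q"
    and "order G = p * q"
    and "\<not> comm_group G"
  shows "metacyclic G \<and> centre G = {\<one>\<^bsub>G\<^esub>} \<and>
         (\<exists>m n k. Gmnk_params m n k \<and> G \<cong> Gmnk m n k \<and>
                  Sigma_complete m n k (Rset m n k) \<and> Sigma_complete m n k (Lset m n k))"
proof -
  interpret G: group G by (rule assms(1))
  have fin: "finite (carrier G)"
    using assms(2,3,4) G.order_gt_0_iff_finite prime_gt_0_nat by (metis nat_0_less_mult_iff)
  consider "p = q" | "q < p" | "p < q" by linarith
  then show ?thesis
  proof cases
    case 1
    then have "comm_group G" using G.p_squared_comm[OF fin assms(2)] assms(4) by simp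
    then show ?thesis using assms(5) by simp
  next
    case 2
    interpret pqg G p q by (intro pqg.intro assms(1) pqg_axioms.intro assms 2)
    show ?thesis by (rule main)
  next
    case 3
    have o: "order G = q * p" using assms(4) by simp
    interpret pqg G q p by (intro pqg.intro assms(1) pqg_axioms.intro assms(2,3,5) o 3)
    show ?thesis by (rule main)
  qed
qed

end
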